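(* For every finite point set $P$ in general position, the graph $G_\bigtriangledown(P)$ has at most three vertices of degree one.
   Context: A finite point set $P$ in the plane is in general position if no line through two points of $P$ makes an angle of $0^\circ$, $60^\circ$ or $120^\circ$ with the horizontal. A down-triangle is an equilateral triangle with one side parallel to the $x$-axis and the corner opposite to this side below that side. $G_\bigtriangledown(P)$ is the graph with vertex set $P$ in which $p,q$ are adjacent iff some (closed) down-triangle contains $p$ and $q$ and no other point of $P$. *)

theory Defs
  imports Complex_Main
begin

text \<open>General position: for two distinct points p, q of P the line through them
  is not horizontal (angle 0) and does not make angle 60 or 120 degrees with the
  horizontal, i.e. its slope is neither 0, sqrt 3 nor -sqrt 3.\<close>
definition general_position :: "(real \<times> real) set \<Rightarrow> bool" where
  "general_position P \<longleftrightarrow>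
     (\<forall>p\<in>P. \<forall>q\<in>P. p \<noteq> q \<longrightarrow>
        snd q - snd p \<noteq> 0 \<and>
        snd q - snd p \<noteq> sqrt 3 * (fst q - fst p) \<and>
        snd q - snd p \<noteq> - sqrt 3 * (fst q - fst p))"

text \<open>Closed down-triangle with bottom apex (a, b) and height h > 0: an
  equilateral triangle with horizontal top side at height b + h and the opposite
  corner (a, b) below it.\<close>
definition down_triangle :: "real \<Rightarrow> real \<Rightarrow> real \<Rightarrow> (real \<times> real) set" where
  "down_triangle a b h =
     {(x, y). b \<le> y \<and> y \<le> b + h \<and> \<bar>x - a\<bar> * sqrt 3 \<le> y - b}"

definition is_down_triangle :: "(real \<times> real) set \<Rightarrow> bool" where
  "is_down_triangle T \<longleftrightarrow> (\<exists>a b h. h > 0 \<and> T = down_triangle a b h)"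

definition Gdown_adj :: "(real \<times> real) set \<Rightarrow> real \<times> real \<Rightarrow> real \<times> real \<Rightarrow> bool" where
  "Gdown_adj P p q \<longleftrightarrow> p \<in> P \<and> q \<in> P \<and> p \<noteq> q \<and>
     (\<exists>T. is_down_triangle T \<and> T \<inter> P = {p, q})"

definition Gdown_degree :: "(real \<times> real) set \<Rightarrow> real \<times> real \<Rightarrow> nat" where
  "Gdown_degree P p = card {q \<in> P. Gdown_adj P p q}"

end

theory Submission
  imports Defs
begin

definition L2 :: "real \<times> real \<Rightarrow> real" where "L2 z = snd z - sqrt 3 * fst z"
definition L3 :: "real \<times> real \<Rightarrow> real" where "L3 z = snd z + sqrt 3 * fst z"

definition Tri :: "real \<times> real \<Rightarrow> real \<times> real \<Rightarrow> (real \<times> real) set" where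
  "Tri p r = {z. snd z \<le> max (snd p) (snd r) \<and> min (L2 p) (L2 r) \<le> L2 z \<and> min (L3 p) (L3 r) \<le> L3 z}"

lemma gp:
  assumes "general_position P" "p \<in> P" "q \<in> P" "p \<noteq> q"
  shows "snd q \<noteq> snd p" "L2 q \<noteq> L2 p" "L3 q \<noteq> L3 p"
  using assms unfolding general_position_def L2_def L3_def
  by (auto simp: algebra_simps)

lemma tri_mem: "p \<in> Tri p r" "r \<in> Tri p r"
  unfolding Tri_def by auto

lemma tri_sub: "u \<in> Tri p r \<Longrightarrow> v \<in> Tri p r \<Longrightarrow> Tri u v \<subseteq> Tri p r"
  unfolding Tri_def by (auto simp: min_def max_def split: if_splits)

lemma tri_down:
  assumes "snd p \<noteq> snd r"
  shows "is_down_triangle (Tri p r)"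
proof -
  define s where "s = sqrt (3::real)"
  have s: "s > 0" unfolding s_def by simp
  define B where "B = min (L2 p) (L2 r)"
  define C where "C = min (L3 p) (L3 r)"
  define Y where "Y = max (snd p) (snd r)"
  define a where "a = (C - B) / (2 * s)"
  define b where "b = (B + C) / 2"
  define h where "h = Y - b"
  have as: "a * s = (C - B) / 2" unfolding a_def using s by simp
  have "B + C \<le> 2 * snd p" "B + C \<le> 2 * snd r"
    unfolding B_def C_def L2_def L3_def by auto
  hence hpos: "h > 0" unfolding h_def b_def Y_def using assms by auto
  have eq: "Tri p r = down_triangle a b h"
  proof (rule set_eqI)
    fix z :: "real \<times> real"
    obtain x y where z: "z = (x, y)" by (cases z)
    have e0: "(x - a) * s = s * x - (C - B) / 2" using as by (simp add: algebra_simps)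
    have e: "\<bar>x - a\<bar> * s = \<bar>s * x - (C - B) / 2\<bar>"
      using s e0 by (metis abs_mult abs_of_pos)
    have "z \<in> Tri p r \<longleftrightarrow> y \<le> Y \<and> B \<le> y - s * x \<and> C \<le> y + s * x"
      unfolding Tri_def z B_def C_def Y_def L2_def L3_def s_def by simp
    also have "\<dots> \<longleftrightarrow> b \<le> y \<and> y \<le> b + h \<and> \<bar>x - a\<bar> * s \<le> y - b"
      unfolding e b_def h_def abs_le_iff
      by argo
    also have "\<dots> \<longleftrightarrow> z \<in> down_triangle a b h"
      unfolding down_triangle_def z s_def by simp
    finally show "z \<in> Tri p r \<longleftrightarrow> z \<in> down_triangle a b h" .
  qed
  show ?thesis unfolding is_down_triangle_def using eq hpos by blast
qed

lemma notin_smaller: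
  assumes "general_position P" "p \<in> P" "r \<in> P" "r' \<in> P" "r \<noteq> p" "r' \<noteq> r"
    "r' \<in> Tri p r"
  shows "r \<notin> Tri p r'"
proof
  assume r: "r \<in> Tri p r'"
  have g1: "snd r \<noteq> snd p" "L2 r \<noteq> L2 p" "L3 r \<noteq> L3 p" using gp assms by metis+
  have g2: "snd r' \<noteq> snd r" "L2 r' \<noteq> L2 r" "L3 r' \<noteq> L3 r" using gp assms by metis+
  have sum: "L2 z + L3 z = 2 * snd z" for z unfolding L2_def L3_def by simp
  show False
  proof (cases "snd r > snd p")
    case True
    then show ?thesis using r assms(7) g2 unfolding Tri_def by auto
  next
    case False
    hence "snd r < snd p" using g1 by auto
    hence "L2 r < L2 p \<or> L3 r < L3 p" using sum[of r] sum[of p] g1 by fastforce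
    then show ?thesis using r assms(7) g2 unfolding Tri_def by auto
  qed
qed

lemma neighbor:
  assumes "finite P" "general_position P" "p \<in> P"
  shows "r \<in> P \<Longrightarrow> r \<noteq> p \<Longrightarrow> \<exists>q. Gdown_adj P p q \<and> q \<in> Tri p r"
proof (induction "card (Tri p r \<inter> P)" arbitrary: r rule: less_induct)
  case less
  show ?case
  proof (cases "Tri p r \<inter> P = {p, r}")
    case True
    have "snd r \<noteq> snd p" using gp(1)[OF assms(2,3) less.prems(1) less.prems(2)[symmetric]] .
    hence d: "is_down_triangle (Tri p r)" using tri_down by metis
    have "Gdown_adj P p r" unfolding Gdown_adj_def
      using assms(3) less.prems(1,2) d True by (intro conjI exI[of _ "Tri p r"]) auto
    then show ?thesis using tri_mem by blast
  next
    case False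
    have "{p, r} \<subseteq> Tri p r \<inter> P" using tri_mem less.prems assms(3) by auto
    then obtain r' where r': "r' \<in> Tri p r" "r' \<in> P" "r' \<noteq> p" "r' \<noteq> r" using False by blast
    have sub: "Tri p r' \<subseteq> Tri p r" using tri_sub[OF tri_mem(1) r'(1)] .
    have "r \<notin> Tri p r'" using notin_smaller[OF assms(2,3) less.prems(1) r'(2) less.prems(2) r'(4) r'(1)] .
    hence nr: "r \<notin> Tri p r' \<inter> P" by blast
    have rin: "r \<in> Tri p r \<inter> P" using less.prems(1) tri_mem(2) by blast
    have ss: "Tri p r' \<inter> P \<subseteq> Tri p r \<inter> P" using sub by blast
    have ps: "Tri p r' \<inter> P \<noteq> Tri p r \<inter> P" using nr rin by blast
    have "card (Tri p r' \<inter> P) < card (Tri p r \<inter> P)"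
      by (rule psubset_card_mono) (use assms(1) ss ps in auto)
    then obtain q where "Gdown_adj P p q" "q \<in> Tri p r'" using less.hyps[OF _ r'(2) r'(3)] by blast
    then show ?thesis using sub by blast
  qed
qed

definition A1 where "A1 P p \<longleftrightarrow> (\<forall>r\<in>P. r \<noteq> p \<longrightarrow> snd p < snd r)"
definition A2 where "A2 P p \<longleftrightarrow> (\<forall>r\<in>P. r \<noteq> p \<longrightarrow> L2 r < L2 p)"
definition A3 where "A3 P p \<longleftrightarrow> (\<forall>r\<in>P. r \<noteq> p \<longrightarrow> L3 r < L3 p)"

lemma deg1_extreme:
  assumes "finite P" "general_position P" "p \<in> P" "Gdown_degree P p = 1"
  shows "A1 P p \<or> A2 P p \<or> A3 P p"
proof -
  obtain q where q: "{q \<in> P. Gdown_adj P p q} = {q}"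
    using assms(4) unfolding Gdown_degree_def by (meson card_1_singletonE)
  hence qa: "Gdown_adj P p q" by blast
  hence qP: "q \<in> P" "q \<noteq> p" unfolding Gdown_adj_def by auto
  have inT: "q \<in> Tri p r" if rP: "r \<in> P" and rp: "r \<noteq> p" for r
  proof -
    obtain q' where "Gdown_adj P p q'" "q' \<in> Tri p r" using neighbor[OF assms(1,2,3) rP rp] by blast
    moreover have "q' \<in> P" using calculation unfolding Gdown_adj_def by auto
    ultimately have "q' \<in> {q \<in> P. Gdown_adj P p q}" by simp
    hence "q' = q" using q by simp
    thus ?thesis using \<open>q' \<in> Tri p r\<close> by simp
  qed
  have g1: "snd q \<noteq> snd p" "L2 q \<noteq> L2 p" "L3 q \<noteq> L3 p" using gp[OF assms(2,3) qP(1) qP(2)[symmetric]] by auto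
  have sum: "L2 z + L3 z = 2 * snd z" for z unfolding L2_def L3_def by simp
  show ?thesis
  proof (cases "snd q > snd p")
    case True
    have "A1 P p" unfolding A1_def
    proof (intro ballI impI)
      fix r assume "r \<in> P" "r \<noteq> p"
      then have "q \<in> Tri p r" "snd r \<noteq> snd p" using inT gp(1)[OF assms(2,3)] by blast+
      then show "snd p < snd r" using True unfolding Tri_def by auto
    qed
    then show ?thesis by simp
  next
    case False
    hence "snd q < snd p" using g1 by auto
    hence "L2 q < L2 p \<or> L3 q < L3 p" using sum[of q] sum[of p] g1 by fastforce
    then show ?thesis
    proof
      assume c: "L2 q < L2 p"
      have "A2 P p" unfolding A2_def
      proof (intro ballI impI)
        fix r assume "r \<in> P" "r \<noteq> p"
        then have "q \<in> Tri p r" using inT by metis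
        then show "L2 r < L2 p" using c unfolding Tri_def by auto
      qed
      then show ?thesis by simp
    next
      assume c: "L3 q < L3 p"
      have "A3 P p" unfolding A3_def
      proof (intro ballI impI)
        fix r assume "r \<in> P" "r \<noteq> p"
        then have "q \<in> Tri p r" using inT by metis
        then show "L3 r < L3 p" using c unfolding Tri_def by auto
      qed
      then show ?thesis by simp
    qed
  qed
qed

theorem lemma3:
  fixes P :: "(real \<times> real) set"
  assumes "finite P" and "general_position P"
  shows "card {p \<in> P. Gdown_degree P p = 1} \<le> 3"
proof -
  define D where "D = {p \<in> P. Gdown_degree P p = 1}"
  define f :: "real \<times> real \<Rightarrow> nat" where
    "f p = (if A1 P p then 1 else if A2 P p then 2 else 3)" for p
  have ext: "A1 P p \<or> A2 P p \<or> A3 P p" if "p \<in> D" for p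
    using deg1_extreme assms that unfolding D_def by blast
  have inj: "inj_on f D"
  proof (rule inj_onI)
    fix p p' assume pD: "p \<in> D" and p'D: "p' \<in> D" and e: "f p = f p'"
    have P: "p \<in> P" "p' \<in> P" using pD p'D unfolding D_def by auto
    show "p = p'"
    proof (rule ccontr)
      assume ne: "p \<noteq> p'"
      have "(A1 P p \<and> A1 P p') \<or> (A2 P p \<and> A2 P p') \<or> (A3 P p \<and> A3 P p')"
        using e ext[OF pD] ext[OF p'D] unfolding f_def by (auto split: if_splits)
      then show False using P ne unfolding A1_def A2_def A3_def by fastforce
    qed
  qed
  have "f ` D \<subseteq> {1,2,3}" unfolding f_def by auto
  hence "card D \<le> card {1,2,3::nat}" using card_inj_on_le[OF inj] by blast
  thus ?thesis unfolding D_def by simp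
qed

end
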